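(* Let $X$ be a compact metric space with metric $d$, $T:X\to X$ continuous, and $\Phi=\{\phi_n\}_{n\ge1}$ a supadditive potential on $X$. Fix a positive integer $k$. Then there is a constant $C$ such that for every $\eta>0$ there exists $\epsilon_0>0$ such that for every $0<\epsilon<\epsilon_0$, every $n\ge1$ and every $x\in X$, \[ \phi_n(x)\ge\sup_{y\in B_n(x,\epsilon)}\sum_{i=0}^{n-1}\frac1k\phi_k(T^iy)-n\eta-C. \]
   Context: A supadditive potential is a sequence of continuous $\phi_n:X\to\mathbb{R}$ with $\phi_{n+m}(x)\ge\phi_n(x)+\phi_m(T^nx)$ for all $x\in X$, $n,m\ge1$. $B_n(x,\epsilon)=\{y\in X:d(T^ix,T^iy)<\epsilon\ \text{for}\ 0\le i\le n-1\}$. *)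

theory Defs
  imports "HOL-Analysis.Analysis"
begin

definition supadditive_potential :: "'a::metric_space set \<Rightarrow> ('a \<Rightarrow> 'a) \<Rightarrow> (nat \<Rightarrow> 'a \<Rightarrow> real) \<Rightarrow> bool" where
  "supadditive_potential X T \<phi> \<longleftrightarrow>
     (\<forall>n\<ge>1. continuous_on X (\<phi> n)) \<and>
     (\<forall>x\<in>X. \<forall>n\<ge>1. \<forall>m\<ge>1. \<phi> (n + m) x \<ge> \<phi> n x + \<phi> m ((T ^^ n) x))"

definition bowen_ball :: "'a::metric_space set \<Rightarrow> ('a \<Rightarrow> 'a) \<Rightarrow> nat \<Rightarrow> 'a \<Rightarrow> real \<Rightarrow> 'a set" where
  "bowen_ball X T n x \<epsilon> = {y \<in> X. \<forall>i<n. dist ((T ^^ i) x) ((T ^^ i) y) < \<epsilon>}"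

end

theory Submission
  imports Defs
begin

lemma funpow_in:
  assumes "T ` X \<subseteq> X" "x \<in> X" shows "(T ^^ i) x \<in> X"
  using assms by (induction i) auto

lemma offset0:
  assumes sp: "supadditive_potential X T \<phi>" and TX: "T ` X \<subseteq> X" and k: "k \<ge> 1"
    and bd: "\<And>m x. m \<in> {1..k} \<Longrightarrow> x \<in> X \<Longrightarrow> \<bar>\<phi> m x\<bar> \<le> M" and M: "M \<ge> 0"
  shows "n \<ge> 1 \<Longrightarrow> x \<in> X \<Longrightarrow> \<phi> n x \<ge> (\<Sum>l< n div k. \<phi> k ((T ^^ (l*k)) x)) - M"
proof (induction n arbitrary: x rule: less_induct)
  case (less n)
  show ?case
  proof (cases "n < k")
    case True
    then have "n div k = 0" by simp
    moreover have "\<bar>\<phi> n x\<bar> \<le> M" using bd less True by auto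
    ultimately show ?thesis by simp
  next
    case False
    show ?thesis
    proof (cases "n = k")
      case True
      then show ?thesis using k M by simp
    next
      case False2: False
      with False have nk: "n > k" by simp
      have H: "\<forall>x\<in>X. \<forall>n\<ge>1. \<forall>m\<ge>1. \<phi> (n + m) x \<ge> \<phi> n x + \<phi> m ((T ^^ n) x)"
        using sp unfolding supadditive_potential_def by blast
      have A: "\<phi> n x \<ge> \<phi> k x + \<phi> (n-k) ((T ^^ k) x)"
        using H[rule_format, of x k "n-k"] less.prems k nk by simp
      have Tk: "(T ^^ k) x \<in> X" using funpow_in[OF TX less.prems(2)] .
      have IH: "\<phi> (n-k) ((T ^^ k) x) \<ge> (\<Sum>l< (n-k) div k. \<phi> k ((T ^^ (l*k)) ((T ^^ k) x))) - M"
        using less.IH[of "n-k" "(T ^^ k) x"] nk k Tk by auto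
      have dv: "n div k = Suc ((n-k) div k)" using nk k
        by (simp add: le_div_geq)
      have "(\<Sum>l< n div k. \<phi> k ((T ^^ (l*k)) x)) = \<phi> k x + (\<Sum>l< (n-k) div k. \<phi> k ((T ^^ (Suc l*k)) x))"
        unfolding dv sum.lessThan_Suc_shift by simp
      also have "(\<Sum>l< (n-k) div k. \<phi> k ((T ^^ (Suc l*k)) x)) = (\<Sum>l< (n-k) div k. \<phi> k ((T ^^ (l*k)) ((T ^^ k) x)))"
      proof -
        have E: "\<And>l. (T ^^ (Suc l * k)) x = (T ^^ (l*k)) ((T ^^ k) x)"
          by (metis add.commute comp_apply funpow_add mult_Suc)
        show ?thesis by (simp only: E)
      qed
      finally show ?thesis using A IH by linarith
    qed
  qed
qed

lemma offsetj:
  assumes sp: "supadditive_potential X T \<phi>" and TX: "T ` X \<subseteq> X" and k: "k \<ge> 1"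
    and bd: "\<And>m x. m \<in> {1..k} \<Longrightarrow> x \<in> X \<Longrightarrow> \<bar>\<phi> m x\<bar> \<le> M" and M: "M \<ge> 0"
    and j: "j < k" and n: "n \<ge> 1" and x: "x \<in> X"
  shows "\<phi> n x \<ge> (\<Sum>l< (n-j) div k. \<phi> k ((T ^^ (j + l*k)) x)) - 2*M"
proof (cases "j = 0")
  case True
  then show ?thesis using offset0[OF sp TX k bd M n x] M by simp
next
  case False
  show ?thesis
  proof (cases "n \<le> j")
    case True
    have "\<bar>\<phi> n x\<bar> \<le> M" using bd n True j x by auto
    then show ?thesis using True M by simp
  next
    case False2: False
    have H: "\<forall>x\<in>X. \<forall>n\<ge>1. \<forall>m\<ge>1. \<phi> (n + m) x \<ge> \<phi> n x + \<phi> m ((T ^^ n) x)"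
      using sp unfolding supadditive_potential_def by blast
    have A: "\<phi> n x \<ge> \<phi> j x + \<phi> (n-j) ((T ^^ j) x)"
      using H[rule_format, of x j "n-j"] x False False2 by simp
    have B: "\<bar>\<phi> j x\<bar> \<le> M" using bd False j x by auto
    have C: "\<phi> (n-j) ((T ^^ j) x) \<ge> (\<Sum>l< (n-j) div k. \<phi> k ((T ^^ (l*k)) ((T ^^ j) x))) - M"
      using offset0[OF sp TX k bd M, of "n-j" "(T ^^ j) x"] False2 funpow_in[OF TX x] by auto
    have E: "\<And>l. (T ^^ (j + l*k)) x = (T ^^ (l*k)) ((T ^^ j) x)"
      by (metis add.commute comp_apply funpow_add)
    have "(\<Sum>l< (n-j) div k. \<phi> k ((T ^^ (l*k)) ((T ^^ j) x))) = (\<Sum>l< (n-j) div k. \<phi> k ((T ^^ (j + l*k)) x))"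
      by (simp only: E)
    then show ?thesis using A B C by linarith
  qed
qed

lemma main_ineq:
  assumes sp: "supadditive_potential X T \<phi>" and TX: "T ` X \<subseteq> X" and k: "k \<ge> 1"
    and bd: "\<And>m x. m \<in> {1..k} \<Longrightarrow> x \<in> X \<Longrightarrow> \<bar>\<phi> m x\<bar> \<le> M" and M: "M \<ge> 0"
    and n: "n \<ge> 1" and x: "x \<in> X"
  shows "real k * \<phi> n x \<ge> (\<Sum>i<n. \<phi> k ((T ^^ i) x)) - 3 * real k * M"
proof -
  define f where "f i = \<phi> k ((T ^^ i) x)" for i
  define L where "L j = {..< (n-j) div k}" for j
  define h where "h p = fst p + snd p * k" for p :: "nat \<times> nat"
  define S where "S = Sigma {..<k} L"
  have "real k * \<phi> n x = (\<Sum>j<k. \<phi> n x)" by simp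
  also have "\<dots> \<ge> (\<Sum>j<k. (\<Sum>l\<in>L j. f (j + l*k)) - 2*M)"
    by (rule sum_mono) (use offsetj[OF sp TX k bd M _ n x] in \<open>auto simp: L_def f_def\<close>)
  finally have 1: "real k * \<phi> n x \<ge> (\<Sum>j<k. (\<Sum>l\<in>L j. f (j + l*k))) - 2 * real k * M"
    by (simp add: sum_subtractf)
  have 2: "(\<Sum>j<k. (\<Sum>l\<in>L j. f (j + l*k))) = (\<Sum>p\<in>S. f (h p))"
    unfolding S_def h_def by (subst sum.Sigma) (auto simp: L_def split_def)
  have inj: "inj_on h S"
  proof (rule inj_onI)
    fix p q assume "p \<in> S" "q \<in> S" "h p = h q"
    then have "h p mod k = h q mod k" "h p div k = h q div k" by auto
    moreover have "h p mod k = fst p" "h q mod k = fst q" "h p div k = snd p" "h q div k = snd q"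
      using \<open>p \<in> S\<close> \<open>q \<in> S\<close> unfolding h_def S_def by auto
    ultimately show "p = q" by (simp add: prod_eq_iff)
  qed
  have 3: "(\<Sum>p\<in>S. f (h p)) = (\<Sum>i\<in>h ` S. f i)"
    using sum.reindex[OF inj, of f] by simp
  have img1: "h ` S \<subseteq> {..<n}"
  proof
    fix i assume "i \<in> h ` S"
    then obtain j l where jl: "j < k" "l < (n-j) div k" "i = j + l*k"
      unfolding S_def L_def h_def by auto
    have "Suc l * k \<le> (n-j) div k * k" using jl(2) by (meson Suc_leI mult_le_mono1)
    also have "\<dots> \<le> n - j" by (metis div_mult_mod_eq le_add1)
    finally show "i \<in> {..<n}" using jl k by auto
  qed
  have img2: "{..<n} - h ` S \<subseteq> {n-k..<n}"
  proof
    fix i assume i: "i \<in> {..<n} - h ` S"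
    show "i \<in> {n-k..<n}"
    proof (rule ccontr)
      assume "i \<notin> {n-k..<n}"
      then have ik: "i + k \<le> n" using i by auto
      define j where "j = i mod k"
      define l where "l = i div k"
      have j: "j < k" using k unfolding j_def by simp
      have il: "i = j + l*k" unfolding j_def l_def by simp
      have "Suc l * k \<le> n - j" using ik il by simp
      then have "Suc l \<le> (n-j) div k" using k by (simp add: less_eq_div_iff_mult_less_eq)
      then have "(j,l) \<in> S" unfolding S_def L_def using j by auto
      then have "i \<in> h ` S" using il unfolding h_def by force
      then show False using i by auto
    qed
  qed
  have fb: "f i \<le> M" for i
    using bd[of k "(T ^^ i) x"] k funpow_in[OF TX x] unfolding f_def by auto
  have "(\<Sum>i<n. f i) = (\<Sum>i\<in>h ` S. f i) + (\<Sum>i\<in>{..<n} - h ` S. f i)"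
    using sum.subset_diff[OF img1, of f] by simp
  also have "(\<Sum>i\<in>{..<n} - h ` S. f i) \<le> real (card ({..<n} - h ` S)) * M"
    using sum_bounded_above[of "{..<n} - h ` S" f M] fb by auto
  also have "real (card ({..<n} - h ` S)) * M \<le> real k * M"
  proof -
    have "card ({..<n} - h ` S) \<le> card {n-k..<n}" by (rule card_mono[OF _ img2]) simp
    also have "\<dots> \<le> k" by simp
    finally show ?thesis using M by (simp add: mult_right_mono)
  qed
  finally have 4: "(\<Sum>i<n. f i) \<le> (\<Sum>i\<in>h ` S. f i) + real k * M" by simp
  show ?thesis using 1 2 3 4 unfolding f_def by linarith
qed

theorem mainTheorem13:
  fixes X :: "'a::metric_space set" and T :: "'a \<Rightarrow> 'a" and \<phi> :: "nat \<Rightarrow> 'a \<Rightarrow> real" and k :: nat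
  assumes "compact X"
    and "continuous_on X T" and "T ` X \<subseteq> X"
    and "supadditive_potential X T \<phi>"
    and "k \<ge> 1"
  shows "\<exists>C::real. \<forall>\<eta>>0. \<exists>\<epsilon>0>0. \<forall>\<epsilon>. 0 < \<epsilon> \<and> \<epsilon> < \<epsilon>0 \<longrightarrow>
           (\<forall>n\<ge>1. \<forall>x\<in>X. \<forall>y\<in>bowen_ball X T n x \<epsilon>.
              \<phi> n x \<ge> (\<Sum>i<n. (1 / real k) * \<phi> k ((T ^^ i) y)) - real n * \<eta> - C)"
proof -
  have cont: "continuous_on X (\<phi> m)" if "m \<in> {1..k}" for m
    using assms(4) that unfolding supadditive_potential_def by auto
  have "bounded (\<Union>m\<in>{1..k}. \<phi> m ` X)"
    by (rule bounded_UN) (auto intro!: compact_imp_bounded compact_continuous_image cont assms(1))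
  then obtain M where M: "M > 0" "\<And>m x. m \<in> {1..k} \<Longrightarrow> x \<in> X \<Longrightarrow> \<bar>\<phi> m x\<bar> \<le> M"
    unfolding bounded_pos by fastforce
  have ineq: "real k * \<phi> n x \<ge> (\<Sum>i<n. \<phi> k ((T ^^ i) x)) - 3 * real k * M" if "n \<ge> 1" "x \<in> X" for n x
    using main_ineq[OF assms(4,3,5) M(2) _ that] M(1) by simp
  have uc: "uniformly_continuous_on X (\<phi> k)"
    using compact_uniformly_continuous[OF cont assms(1)] assms(5) by auto
  show ?thesis
  proof (rule exI[of _ "3*M"], intro allI impI)
    fix \<eta> :: real assume eta: "\<eta> > 0"
    obtain d where d: "d > 0" "\<And>a b. a \<in> X \<Longrightarrow> b \<in> X \<Longrightarrow> dist b a < d \<Longrightarrow> dist (\<phi> k b) (\<phi> k a) < \<eta>"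
      using uc eta unfolding uniformly_continuous_on_def by metis
    show "\<exists>\<epsilon>0>0. \<forall>\<epsilon>. 0 < \<epsilon> \<and> \<epsilon> < \<epsilon>0 \<longrightarrow>
           (\<forall>n\<ge>1. \<forall>x\<in>X. \<forall>y\<in>bowen_ball X T n x \<epsilon>.
              \<phi> n x \<ge> (\<Sum>i<n. (1 / real k) * \<phi> k ((T ^^ i) y)) - real n * \<eta> - 3*M)"
    proof (rule exI[of _ d], rule conjI[OF d(1)], intro allI impI ballI)
      fix \<epsilon> n x y assume e: "0 < \<epsilon> \<and> \<epsilon> < d" and n: "1 \<le> n" and x: "x \<in> X"
        and y: "y \<in> bowen_ball X T n x \<epsilon>"
      have yX: "y \<in> X" and dy: "\<And>i. i < n \<Longrightarrow> dist ((T ^^ i) x) ((T ^^ i) y) < \<epsilon>"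
        using y unfolding bowen_ball_def by auto
      have kpos: "real k \<ge> 1" using assms(5) by simp
      have step: "(1 / real k) * \<phi> k ((T ^^ i) y) \<le> (1 / real k) * \<phi> k ((T ^^ i) x) + \<eta>" if "i < n" for i
      proof -
        have "dist (\<phi> k ((T ^^ i) y)) (\<phi> k ((T ^^ i) x)) < \<eta>"
        proof -
          have "dist ((T ^^ i) y) ((T ^^ i) x) < d" using dy[OF that] e by (metis dist_commute order.strict_trans)
          then show ?thesis using d(2)[OF funpow_in[OF assms(3) x] funpow_in[OF assms(3) yX]] by blast
        qed
        then have a: "\<phi> k ((T ^^ i) y) \<le> \<phi> k ((T ^^ i) x) + \<eta>" by (simp add: dist_real_def)
        have "(1 / real k) * \<phi> k ((T ^^ i) y) \<le> (1 / real k) * (\<phi> k ((T ^^ i) x) + \<eta>)"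
          using a kpos by (intro mult_left_mono) auto
        also have "\<dots> \<le> (1 / real k) * \<phi> k ((T ^^ i) x) + \<eta>"
          using kpos eta by (simp add: distrib_left divide_le_eq)
        finally show ?thesis .
      qed
      have "(\<Sum>i<n. (1 / real k) * \<phi> k ((T ^^ i) y)) \<le> (\<Sum>i<n. (1 / real k) * \<phi> k ((T ^^ i) x) + \<eta>)"
        by (rule sum_mono) (use step in auto)
      also have "\<dots> = (1 / real k) * (\<Sum>i<n. \<phi> k ((T ^^ i) x)) + real n * \<eta>"
        by (simp add: sum.distrib sum_distrib_left)
      finally have F: "(\<Sum>i<n. (1 / real k) * \<phi> k ((T ^^ i) y)) \<le> (1 / real k) * (\<Sum>i<n. \<phi> k ((T ^^ i) x)) + real n * \<eta>" .
      have G: "(1 / real k) * (\<Sum>i<n. \<phi> k ((T ^^ i) x)) \<le> \<phi> n x + 3 * M"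
      proof -
        have "(\<Sum>i<n. \<phi> k ((T ^^ i) x)) \<le> real k * (\<phi> n x + 3 * M)"
          using ineq[OF n x] by (simp add: algebra_simps)
        then show ?thesis using kpos by (simp add: divide_le_eq mult.commute)
      qed
      show "\<phi> n x \<ge> (\<Sum>i<n. (1 / real k) * \<phi> k ((T ^^ i) y)) - real n * \<eta> - 3*M"
        using F G by linarith
    qed
  qed
qed

end
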